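(* Fix an integer $q\ge 2$ and let $a_1/b_1<a_2/b_2<\dots<a_m/b_m=1$ be the elements (in lowest terms, with positive integers $a_k,b_k$) of the set of reduced fractions $a/b\le 1$ with $2\le a+b\le q$. Let $n=4\sum_{k=1}^m b_k$ and define binary sequences of length $n$ $$S=0^{b_1+a_1}1^{b_1-a_1}0^{b_2+a_2}1^{b_2-a_2}\cdots 0^{b_m+a_m}1^{b_m-a_m}\;0^{b_m-a_m}1^{b_m+a_m}\cdots 0^{b_1-a_1}1^{b_1+a_1},\qquad T=1^{n/2}0^{n/2}.$$ For $1\le r\le m$ let $j(r)=\sum_{k=r}^m 2b_k$ and $j(m+1)=0$. For $1\le r\le m+1$ let $\Gamma_r$ be the alignment of $S$ and $T$ in which the first $j(r)$ occurrences of $0$ in $S$ are aligned with spaces, the remaining $n-j(r)$ characters of $S$ are aligned in order, without spaces, with the first $n-j(r)$ characters of $T$, and the last $j(r)$ characters of $T$ are aligned with spaces (so $\Gamma_{m+1}$ is the alignment with no spaces). Then for every alignment $\Gamma$ of $S$ and $T$ and every $\beta\ge 0$, there is some $r\in\{1,\dots,m+1\}$ such that $\mathrm{score}_{(0,\beta)}(\Gamma_r)\ge \mathrm{score}_{(0,\beta)}(\Gamma)$.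
   Context: An alignment of sequences $S,T$ is a pair $(S',T')$ of equal-length strings obtained by inserting space symbols "$-$" into $S$ and $T$, with no position having spaces in both. Its summary is $(w,x,y)$, with $w$ the number of positions with equal characters (matches), $x$ the number of positions with different characters (mismatches), and $y$ the number of positions with a space. For parameters $(\alpha,\beta)$, $\mathrm{score}_{(\alpha,\beta)}(\Gamma)=w-\alpha x-\beta y$; in particular $\mathrm{score}_{(0,\beta)}(\Gamma)=w-\beta y$. *)

theory Defs
  imports Complex_Main
begin

text \<open>Characters are natural numbers (0 and 1 are used); a space is None.
  An alignment is a list of columns (top character, bottom character).\<close>

type_synonym column = "nat option \<times> nat option"

definition is_alignment :: "nat list \<Rightarrow> nat list \<Rightarrow> column list \<Rightarrow> bool" where
  "is_alignment S T G \<longleftrightarrow>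
     List.map_filter fst G = S \<and> List.map_filter snd G = T \<and>
     (\<forall>c\<in>set G. fst c \<noteq> None \<or> snd c \<noteq> None)"

definition matches :: "column list \<Rightarrow> nat" where
  "matches G = length (filter (\<lambda>(x, y). x \<noteq> None \<and> y \<noteq> None \<and> x = y) G)"

definition mismatches :: "column list \<Rightarrow> nat" where
  "mismatches G = length (filter (\<lambda>(x, y). x \<noteq> None \<and> y \<noteq> None \<and> x \<noteq> y) G)"

definition spaces :: "column list \<Rightarrow> nat" where
  "spaces G = length (filter (\<lambda>(x, y). x = None \<or> y = None) G)"

definition score :: "real \<Rightarrow> real \<Rightarrow> column list \<Rightarrow> real" where
  "score \<alpha> \<beta> G = real (matches G) - \<alpha> * real (mismatches G) - \<beta> * real (spaces G)"

definition farey_set :: "nat \<Rightarrow> (nat \<times> nat) set" where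
  "farey_set q = {(a, b). 0 < a \<and> 0 < b \<and> coprime a b \<and> a \<le> b \<and> 2 \<le> a + b \<and> a + b \<le> q}"

definition fracval :: "nat \<times> nat \<Rightarrow> real" where
  "fracval p = real (fst p) / real (snd p)"

definition seqS :: "(nat \<times> nat) list \<Rightarrow> nat list" where
  "seqS fs = concat (map (\<lambda>(a, b). replicate (b + a) 0 @ replicate (b - a) 1) fs)
           @ concat (map (\<lambda>(a, b). replicate (b - a) 0 @ replicate (b + a) 1) (rev fs))"

definition nlen :: "(nat \<times> nat) list \<Rightarrow> nat" where
  "nlen fs = 4 * sum_list (map snd fs)"

definition seqT :: "(nat \<times> nat) list \<Rightarrow> nat list" where
  "seqT fs = replicate (nlen fs div 2) 1 @ replicate (nlen fs div 2) 0"

text \<open>0-based: jval fs r = sum over k = r..m-1 of 2 b_k (paper's j(r+1)); jval fs m = 0.\<close>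
definition jval :: "(nat \<times> nat) list \<Rightarrow> nat \<Rightarrow> nat" where
  "jval fs r = (\<Sum>k\<in>{r..<length fs}. 2 * snd (fs ! k))"

fun gam_aux :: "nat \<Rightarrow> nat list \<Rightarrow> nat list \<Rightarrow> column list" where
  "gam_aux k [] ts = map (\<lambda>t. (None, Some t)) ts"
| "gam_aux k (s # ss) ts =
     (if s = 0 \<and> 0 < k then (Some s, None) # gam_aux (k - 1) ss ts
      else (case ts of [] \<Rightarrow> (Some s, None) # gam_aux k ss []
                     | t # ts' \<Rightarrow> (Some s, Some t) # gam_aux k ss ts'))"

definition gamma :: "(nat \<times> nat) list \<Rightarrow> nat \<Rightarrow> column list" where
  "gamma fs r = gam_aux (jval fs r) (seqS fs) (seqT fs)"

end

theory Submission
  imports Defs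
begin

lemma mf_append[simp]: "List.map_filter f (xs @ ys) = List.map_filter f xs @ List.map_filter f ys"
  by (simp add: List.map_filter_def)

lemma matches_append[simp]: "matches (G1 @ G2) = matches G1 + matches G2"
  by (simp add: matches_def)
lemma spaces_append[simp]: "spaces (G1 @ G2) = spaces G1 + spaces G2"
  by (simp add: spaces_def)
lemma matches_Cons: "matches (g # G) = (if fst g \<noteq> None \<and> snd g \<noteq> None \<and> fst g = snd g then 1 else 0) + matches G"
  by (cases g) (simp add: matches_def)
lemma spaces_Cons: "spaces (g # G) = (if fst g = None \<or> snd g = None then 1 else 0) + spaces G"
  by (cases g) (simp add: spaces_def)

lemma split_snd:
  "List.map_filter snd G = ys @ zs \<Longrightarrow> \<exists>G1 G2. G = G1 @ G2 \<and> List.map_filter snd G1 = ys \<and> List.map_filter snd G2 = zs"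
proof (induction G arbitrary: ys)
  case Nil thus ?case by simp
next
  case (Cons g G)
  show ?case
  proof (cases "snd g")
    case None
    with Cons.prems have "List.map_filter snd G = ys @ zs" by simp
    from Cons.IH[OF this] obtain G1 G2 where "G = G1 @ G2" "List.map_filter snd G1 = ys" "List.map_filter snd G2 = zs" by blast
    thus ?thesis using None by (intro exI[of _ "g # G1"] exI[of _ G2]) simp
  next
    case (Some t)
    show ?thesis
    proof (cases ys)
      case Nil thus ?thesis using Cons.prems by (intro exI[of _ "[]"] exI[of _ "g#G"]) simp
    next
      case (Cons y ys')
      with Some Cons.prems have "List.map_filter snd G = ys' @ zs" "y = t" by simp_all
      from Cons.IH[OF this(1)] obtain G1 G2 where "G = G1 @ G2" "List.map_filter snd G1 = ys'" "List.map_filter snd G2 = zs" by blast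
      thus ?thesis using Some Cons \<open>y = t\<close> by (intro exI[of _ "g # G1"] exI[of _ G2]) simp
    qed
  qed
qed

lemma matches_bound:
  "set (List.map_filter snd G) \<subseteq> {c} \<Longrightarrow> matches G \<le> count_list (List.map_filter fst G) c"
proof (induction G)
  case Nil thus ?case by (simp add: matches_def)
next
  case (Cons g G)
  obtain x y where g: "g = (x, y)" by force
  show ?case using Cons by (cases x; cases y) (auto simp: g matches_Cons)
qed

lemma spaces_bound:
  "int (spaces G) \<ge> \<bar>int (length (List.map_filter fst G)) - int (length (List.map_filter snd G))\<bar>"
proof (induction G)
  case Nil thus ?case by (simp add: spaces_def)
next
  case (Cons g G)
  obtain x y where g: "g = (x, y)" by force
  show ?case using Cons by (cases x; cases y) (auto simp: g spaces_Cons)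
qed

definition Fv :: "nat list \<Rightarrow> nat \<Rightarrow> nat" where
  "Fv S p = count_list (take p S) 1 + count_list (drop p S) 0"

lemma align_bound:
  fixes \<beta> :: real
  assumes "is_alignment S (replicate N 1 @ replicate N 0) G" "length S = 2 * N" "0 \<le> \<beta>"
  shows "\<exists>p\<le>2*N. score 0 \<beta> G \<le> real (Fv S p) - 2 * \<beta> * \<bar>real N - real p\<bar>"
proof -
  from assms(1) have mS: "List.map_filter fst G = S" and mT: "List.map_filter snd G = replicate N 1 @ replicate N 0"
    by (auto simp: is_alignment_def)
  from split_snd[OF mT] obtain G1 G2 where G: "G = G1 @ G2" and g1: "List.map_filter snd G1 = replicate N 1"
    and g2: "List.map_filter snd G2 = replicate N 0" by blast
  define S1 where "S1 = List.map_filter fst G1"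
  define S2 where "S2 = List.map_filter fst G2"
  have S: "S = S1 @ S2" using mS G S1_def S2_def by simp
  define p where "p = length S1"
  have p: "p \<le> 2 * N" using S assms(2) p_def by simp
  have m1: "matches G1 \<le> count_list S1 1" using matches_bound[of G1 1] g1 S1_def by (simp add: set_replicate_conv_if)
  have m2: "matches G2 \<le> count_list S2 0" using matches_bound[of G2 0] g2 S2_def by (simp add: set_replicate_conv_if)
  have F: "Fv S p = count_list S1 1 + count_list S2 0" by (simp add: Fv_def S p_def)
  have s1: "int (spaces G1) \<ge> \<bar>int p - int N\<bar>" using spaces_bound[of G1] g1 S1_def p_def by simp
  have l2: "length S2 = 2 * N - p" using S assms(2) p_def by simp
  have s2: "int (spaces G2) \<ge> \<bar>int (2*N - p) - int N\<bar>" using spaces_bound[of G2] g2 S2_def l2 by simp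
  have sp: "real (spaces G) \<ge> 2 * \<bar>real N - real p\<bar>"
  proof -
    have "int (spaces G) \<ge> 2 * \<bar>int N - int p\<bar>" using s1 s2 p G by (simp add: abs_minus_commute)
    hence "real_of_int (int (spaces G)) \<ge> real_of_int (2 * \<bar>int N - int p\<bar>)" by linarith
    thus ?thesis by simp
  qed
  have mt: "real (matches G) \<le> real (Fv S p)" using m1 m2 F G by simp
  have "score 0 \<beta> G = real (matches G) - \<beta> * real (spaces G)" by (simp add: score_def)
  also have "\<dots> \<le> real (Fv S p) - 2 * \<beta> * \<bar>real N - real p\<bar>"
    using mt mult_left_mono[OF sp assms(3)] by simp
  finally show ?thesis using p by blast
qed


lemma gam_aux_append:
  "count_list xs 0 \<ge> k \<Longrightarrow> length xs = k + length us \<Longrightarrow>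
   gam_aux k (xs @ ys) (us @ vs) = gam_aux k xs us @ gam_aux 0 ys vs"
proof (induction xs arbitrary: k us)
  case Nil thus ?case by simp
next
  case (Cons x xs)
  show ?case
  proof (cases "x = 0 \<and> 0 < k")
    case True
    thus ?thesis using Cons.prems Cons.IH[of "k - 1" us] by auto
  next
    case False
    then obtain u us' where us: "us = u # us'"
      using Cons.prems count_le_length[of xs 0] by (cases us) (auto split: if_splits)
    have "count_list xs 0 \<ge> k" "length xs = k + length us'"
      using Cons.prems False us by (auto split: if_splits)
    thus ?thesis using False us Cons.IH[of k us'] by auto
  qed
qed

lemma gam_aux_B:
  "count_list xs 0 \<ge> k \<Longrightarrow> length xs = k + length us \<Longrightarrow> set us \<subseteq> {1} \<Longrightarrow>
   matches (gam_aux k xs us) = count_list xs 1 \<and> spaces (gam_aux k xs us) = k"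
proof (induction xs arbitrary: k us)
  case Nil thus ?case by (simp add: matches_def spaces_def)
next
  case (Cons x xs)
  show ?case
  proof (cases "x = 0 \<and> 0 < k")
    case True
    thus ?thesis using Cons.prems Cons.IH[of "k - 1" us] by (auto simp: matches_Cons spaces_Cons)
  next
    case False
    then obtain u us' where us: "us = u # us'"
      using Cons.prems count_le_length[of xs 0] by (cases us) (auto split: if_splits)
    have "count_list xs 0 \<ge> k" "length xs = k + length us'" "set us' \<subseteq> {1}" "u = 1"
      using Cons.prems False us by (auto split: if_splits)
    thus ?thesis using False us Cons.IH[of k us'] by (auto simp: matches_Cons spaces_Cons)
  qed
qed

lemma gam_aux_C0: "matches (map (\<lambda>t. (None, Some t)) vs) = 0 \<and> spaces (map (\<lambda>t. (None, Some t)) vs) = length vs"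
  by (induction vs) (auto simp: matches_def spaces_def)

lemma gam_aux_C:
  "length ys \<le> length vs \<Longrightarrow> set vs \<subseteq> {0} \<Longrightarrow>
   matches (gam_aux 0 ys vs) = count_list ys 0 \<and> spaces (gam_aux 0 ys vs) = length vs - length ys"
proof (induction ys arbitrary: vs)
  case Nil thus ?case using gam_aux_C0 by simp
next
  case (Cons y ys)
  then obtain v vs' where vs: "vs = v # vs'" by (cases vs) auto
  thus ?case using Cons.prems Cons.IH[of vs'] by (auto simp: matches_Cons spaces_Cons)
qed

lemma count01: "set xs \<subseteq> {0, 1::nat} \<Longrightarrow> count_list xs 0 + count_list xs 1 = length xs"
  by (induction xs) auto

lemma count_take_drop: "count_list (take p xs) x + count_list (drop p xs) x = count_list xs x"
  by (metis append_take_drop_id count_list_append)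

lemma gam_score:
  fixes \<beta> :: real
  assumes "set S \<subseteq> {0,1}" "length S = 2 * N" "count_list S 1 = N" "j \<le> N"
  shows "score 0 \<beta> (gam_aux j S (replicate N 1 @ replicate N 0)) = real (Fv S (N + j)) - 2 * \<beta> * real j"
proof -
  define xs where "xs = take (N + j) S"
  define ys where "ys = drop (N + j) S"
  have lx: "length xs = N + j" using assms xs_def by simp
  have ly: "length ys = N - j" using assms ys_def by simp
  have c1: "count_list xs 1 \<le> N" using count_take_drop[of "N+j" S 1] assms(3) xs_def by simp
  have "set xs \<subseteq> {0,1}" using assms(1) xs_def by (meson order_trans set_take_subset)
  from count01[OF this] lx c1 have c0: "count_list xs 0 \<ge> j" by simp
  have S: "S = xs @ ys" using xs_def ys_def by simp
  have e: "gam_aux j S (replicate N 1 @ replicate N 0) = gam_aux j xs (replicate N 1) @ gam_aux 0 ys (replicate N 0)"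
    using gam_aux_append[OF c0, of "replicate N 1" ys "replicate N 0"] lx S by simp
  have B: "matches (gam_aux j xs (replicate N 1)) = count_list xs 1 \<and> spaces (gam_aux j xs (replicate N 1)) = j"
    using gam_aux_B[OF c0, of "replicate N 1"] lx by (simp add: set_replicate_conv_if)
  have C: "matches (gam_aux 0 ys (replicate N 0)) = count_list ys 0 \<and> spaces (gam_aux 0 ys (replicate N 0)) = j"
    using gam_aux_C[of ys "replicate N 0"] ly assms(4) by (simp add: set_replicate_conv_if)
  show ?thesis using e B C by (simp add: score_def Fv_def xs_def ys_def algebra_simps)
qed

definition cmp :: "nat \<Rightarrow> nat" where "cmp x = (if x = 0 then 1 else 0)"

lemma count_cmp1: "count_list (map cmp xs) 1 = count_list xs 0"
  by (induction xs) (auto simp: cmp_def)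
lemma count_cmp0: "set xs \<subseteq> {0,1} \<Longrightarrow> count_list (map cmp xs) 0 = count_list xs 1"
  by (induction xs) (auto simp: cmp_def)

lemma symm:
  assumes "set H \<subseteq> {0,1}" "length H = N" "t \<le> N"
  shows "Fv (H @ rev (map cmp H)) (N - t) = Fv (H @ rev (map cmp H)) (N + t)"
proof -
  have st: "set (take (N-t) H) \<subseteq> {0,1}" "set (drop (N-t) H) \<subseteq> {0,1}"
    using assms(1) by (meson order_trans set_take_subset set_drop_subset)+
  have "Fv (H @ rev (map cmp H)) (N - t) = count_list (take (N-t) H) 1 + count_list (drop (N-t) H) 0 + count_list H 1"
    using assms by (simp add: Fv_def count_cmp0)
  moreover have "Fv (H @ rev (map cmp H)) (N + t) = count_list H 1 + count_list (drop (N-t) H) 0 + count_list (take (N-t) H) 1"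
    using assms st by (simp add: Fv_def take_rev drop_rev count_cmp0 count_cmp1 count_cmp1[simplified] drop_map take_map)
  ultimately show ?thesis by simp
qed


definition blk :: "nat \<times> nat \<Rightarrow> nat list" where
  "blk xy = replicate (fst xy) 0 @ replicate (snd xy) 1"

definition bd :: "(nat \<times> nat) list \<Rightarrow> nat \<Rightarrow> nat" where
  "bd bl i = sum_list (map (\<lambda>xy. fst xy + snd xy) (take i bl))"

lemma count_rep[simp]: "count_list (replicate n a) b = (if a = b then n else 0)"
  by (induction n) auto

lemma Fv_shift: "Fv (B @ W) (length B + q) = count_list B 1 + Fv W q"
  by (simp add: Fv_def)

lemma length_blk[simp]: "length (blk xy) = fst xy + snd xy"
  by (simp add: blk_def)

lemma blk_F: "p \<le> x + y \<Longrightarrow>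
  count_list (take p (blk (x,y))) 1 + count_list (drop p (blk (x,y))) 0 = (if p \<le> x then x - p else p - x)"
  by (auto simp: blk_def)

lemma block_ineq:
  fixes c :: real and p x y :: nat
  assumes "p \<le> x + y"
  shows "real (if p \<le> x then x - p else p - x) - c * p \<le> real x \<or>
         real (if p \<le> x then x - p else p - x) - c * p \<le> real y - c * (real x + real y)"
proof (cases "p \<le> x")
  case True
  hence e: "real (if p \<le> x then x - p else p - x) = real x - real p" by simp
  show ?thesis
  proof (cases "c \<ge> -1")
    case True
    hence "0 \<le> (1 + c) * real p" by simp
    thus ?thesis using e by (simp add: algebra_simps)
  next
    case False
    have "(1 + c) * real x \<le> (1 + c) * real p"
      using False \<open>p \<le> x\<close> by (intro mult_left_mono_neg) auto
    moreover have "0 \<le> (1 - c) * real y" using False by simp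
    ultimately show ?thesis using e by (simp add: algebra_simps)
  qed
next
  case False
  hence e: "real (if p \<le> x then x - p else p - x) = real p - real x" by simp
  show ?thesis
  proof (cases "c \<ge> 1")
    case True
    hence "(1 - c) * real p \<le> 0" by (simp add: mult_nonpos_nonneg)
    thus ?thesis using e by (simp add: algebra_simps)
  next
    case False
    have "(1 - c) * real p \<le> (1 - c) * (real x + real y)"
      using False assms by (intro mult_left_mono) auto
    thus ?thesis using e by (simp add: algebra_simps)
  qed
qed

lemma block_max:
  fixes c :: real
  shows "p \<le> length (concat (map blk bl)) \<Longrightarrow>
   \<exists>i\<le>length bl. real (Fv (concat (map blk bl)) p) - c * p
        \<le> real (Fv (concat (map blk bl)) (bd bl i)) - c * bd bl i"
proof (induction bl arbitrary: p)
  case Nil thus ?case by (simp add: bd_def)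
next
  case (Cons xy bl)
  obtain x y where xy: "xy = (x, y)" by force
  define W where "W = concat (map blk bl)"
  have W: "concat (map blk (xy # bl)) = blk (x,y) @ W" by (simp add: W_def xy)
  show ?case
  proof (cases "x + y \<le> p")
    case True
    define q where "q = p - (x + y)"
    have p: "p = length (blk (x,y)) + q" using True q_def by simp
    have "q \<le> length W" using Cons.prems p W by (simp add: W_def xy)
    from Cons.IH[OF this[unfolded W_def]] obtain i where i: "i \<le> length bl"
      "real (Fv W q) - c * q \<le> real (Fv W (bd bl i)) - c * bd bl i" unfolding W_def by blast
    have bdS: "bd (xy # bl) (Suc i) = length (blk (x,y)) + bd bl i" by (simp add: bd_def xy)
    have Fvp: "Fv (blk (x,y) @ W) p = count_list (blk (x,y)) 1 + Fv W q" unfolding p by (rule Fv_shift)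
    have "real (Fv (blk (x,y) @ W) p) - c * p = real (count_list (blk (x,y)) 1) + (real (Fv W q) - c * q) - c * (x + y)"
      unfolding Fvp by (simp add: p algebra_simps)
    also have "\<dots> \<le> real (count_list (blk (x,y)) 1) + (real (Fv W (bd bl i)) - c * bd bl i) - c * (x + y)"
      using i by simp
    also have "\<dots> = real (Fv (blk (x,y) @ W) (bd (xy # bl) (Suc i))) - c * bd (xy # bl) (Suc i)"
      unfolding bdS Fv_shift by (simp add: algebra_simps)
    finally show ?thesis using i W by (intro exI[of _ "Suc i"]) simp
  next
    case False
    have F: "Fv (blk (x,y) @ W) p = (if p \<le> x then x - p else p - x) + count_list W 0"
      using False blk_F[of p x y] by (simp add: Fv_def)
    have F0: "Fv (blk (x,y) @ W) 0 = x + count_list W 0" by (simp add: Fv_def blk_def)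
    have F1: "Fv (blk (x,y) @ W) (x + y) = y + count_list W 0" using Fv_shift[of "blk (x,y)" W 0]
      by (simp add: Fv_def blk_def)
    have b0: "bd (xy # bl) 0 = 0" and b1: "bd (xy # bl) 1 = x + y" by (simp_all add: bd_def xy)
    from block_ineq[of p x y c] False
    consider "real (if p \<le> x then x - p else p - x) - c * p \<le> real x"
      | "real (if p \<le> x then x - p else p - x) - c * p \<le> real y - c * (real x + real y)" by linarith
    thus ?thesis
    proof cases
      case 1 thus ?thesis using F F0 W b0 by (intro exI[of _ 0]) simp
    next
      case 2 thus ?thesis using F F1 W b1 by (intro exI[of _ 1]) simp
    qed
  qed
qed


lemma Fv_prefix: "p \<le> length H \<Longrightarrow> Fv (H @ W) p = Fv H p + count_list W 0"
  by (simp add: Fv_def)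

definition gA :: "nat \<times> nat \<Rightarrow> nat \<times> nat" where "gA p = (snd p + fst p, snd p - fst p)"
definition gB :: "nat \<times> nat \<Rightarrow> nat \<times> nat" where "gB p = (snd p - fst p, snd p + fst p)"

lemma jval_Cons0: "jval (x # xs) 0 = 2 * snd x + jval xs 0"
  unfolding jval_def atLeast0LessThan by (simp add: sum.lessThan_Suc_shift del: sum.lessThan_Suc)

lemma jval_drop: "jval fs i = sum_list (map (\<lambda>p. 2 * snd p) (drop i fs))"
proof (induction fs arbitrary: i)
  case Nil thus ?case by (simp add: jval_def)
next
  case (Cons x xs)
  show ?case
  proof (cases i)
    case 0 thus ?thesis using Cons.IH[of 0] by (simp add: jval_Cons0)
  next
    case (Suc k)
    have "jval (x # xs) (Suc k) = jval xs k"
      unfolding jval_def using sum.shift_bounds_Suc_ivl[of "\<lambda>k. 2 * snd ((x#xs) ! k)" k "length xs"] by simp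
    thus ?thesis using Cons.IH[of k] Suc by simp
  qed
qed

lemma seqS_split:
  "seqS fs = concat (map blk (map gA fs)) @ rev (map cmp (concat (map blk (map gA fs))))"
  "rev (map cmp (concat (map blk (map gA fs)))) = concat (map blk (map gB (rev fs)))"
proof -
  have e: "rev (map cmp (concat (map blk (map gA fs)))) = concat (map blk (map gB (rev fs)))"
    for fs :: "(nat \<times> nat) list"
  proof (induction fs)
    case Nil thus ?case by simp
  next
    case (Cons x xs)
    thus ?case using Cons by (simp add: blk_def gA_def gB_def cmp_def)
  qed
  have "seqS fs = concat (map blk (map gA fs)) @ concat (map blk (map gB (rev fs)))"
    unfolding seqS_def by (simp add: blk_def gA_def gB_def split_def o_def)
  thus "seqS fs = concat (map blk (map gA fs)) @ rev (map cmp (concat (map blk (map gA fs))))"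
    using e by simp
  show "rev (map cmp (concat (map blk (map gA fs)))) = concat (map blk (map gB (rev fs)))" by (rule e)
qed

lemma set_concat_blk: "set (concat (map blk bl)) \<subseteq> {0,1}"
  by (auto simp: blk_def set_replicate_conv_if split: if_splits)

lemma len_H: "\<forall>p\<in>set fs. fst p \<le> snd p \<Longrightarrow>
   length (concat (map blk (map gA fs))) = sum_list (map (\<lambda>p. 2 * snd p) fs)"
  by (induction fs) (auto simp: gA_def)

lemma bd_A: "\<forall>p\<in>set fs. fst p \<le> snd p \<Longrightarrow>
   bd (map gA fs) i = sum_list (map (\<lambda>p. 2 * snd p) (take i fs))"
proof -
  assume a: "\<forall>p\<in>set fs. fst p \<le> snd p"
  have eq: "map (\<lambda>xy. fst xy + snd xy) (map gA (take i fs)) = map (\<lambda>p. 2 * snd p) (take i fs)"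
    unfolding map_map by (rule map_cong[OF refl]) (use a in \<open>auto simp: gA_def dest!: in_set_takeD\<close>)
  show ?thesis by (simp only: bd_def take_map eq)
qed

lemma bd_B: "\<forall>p\<in>set fs. fst p \<le> snd p \<Longrightarrow> i \<le> length fs \<Longrightarrow>
   bd (map gB (rev fs)) i = jval fs (length fs - i)"
proof -
  assume a: "\<forall>p\<in>set fs. fst p \<le> snd p" and i: "i \<le> length fs"
  have eq: "map (\<lambda>xy. fst xy + snd xy) (map gB (take i (rev fs))) = map (\<lambda>p. 2 * snd p) (take i (rev fs))"
    unfolding map_map by (rule map_cong[OF refl]) (use a in \<open>force simp: gB_def dest!: in_set_takeD\<close>)
  have "bd (map gB (rev fs)) i = sum_list (map (\<lambda>p. 2 * snd p) (take i (rev fs)))"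
    by (simp only: bd_def take_map eq)
  also have "\<dots> = sum_list (map (\<lambda>p. 2 * snd p) (drop (length fs - i) fs))"
    by (simp add: take_rev rev_map[symmetric])
  finally show ?thesis by (simp add: jval_drop)
qed

lemma sum_take_drop: "sum_list (map f (take i xs)) + sum_list (map f (drop i xs)) = (sum_list (map f xs) :: nat)"
  by (metis append_take_drop_id map_append sum_list_append)

theorem mainTheorem4:
  fixes q :: nat and fs :: "(nat \<times> nat) list" and G :: "column list" and \<beta> :: real
  assumes "2 \<le> q"
    and "set fs = farey_set q"
    and "sorted_wrt (\<lambda>p p'. fracval p < fracval p') fs"
    and "is_alignment (seqS fs) (seqT fs) G"
    and "0 \<le> \<beta>"
  shows "\<exists>r\<in>{0..length fs}. score 0 \<beta> (gamma fs r) \<ge> score 0 \<beta> G"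
proof -
  have ab: "\<forall>p\<in>set fs. fst p \<le> snd p" using assms(2) by (auto simp: farey_set_def)
  define H where "H = concat (map blk (map gA fs))"
  define H2 where "H2 = concat (map blk (map gB (rev fs)))"
  define N where "N = sum_list (map (\<lambda>p. 2 * snd p) fs)"
  define m where "m = length fs"
  have H2: "H2 = rev (map cmp H)" using seqS_split(2) H_def H2_def by simp
  have S: "seqS fs = H @ H2" using seqS_split(1) H_def H2 by simp
  have sH: "set H \<subseteq> {0,1}" unfolding H_def by (rule set_concat_blk)
  have lH: "length H = N" using len_H[OF ab] H_def N_def by simp
  have lS: "length (seqS fs) = 2 * N" using S H2 lH by simp
  have c1S: "count_list (seqS fs) 1 = N"
    using S H2 count01[OF sH] lH by (simp add: count_cmp0[OF sH] count_cmp1 count_cmp1[simplified])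
  have nN: "nlen fs div 2 = N"
  proof -
    have "sum_list (map (\<lambda>p. 2 * snd p) fs) = 2 * sum_list (map snd fs)"
      by (induction fs) auto
    thus ?thesis by (simp add: nlen_def N_def)
  qed
  have T: "seqT fs = replicate N 1 @ replicate N 0" using nN by (simp add: seqT_def)
  have jle: "jval fs r \<le> N" for r
    using sum_take_drop[of "\<lambda>p. 2 * snd p" r fs] by (simp add: jval_drop N_def)
  have sS: "set (seqS fs) \<subseteq> {0,1}" using S H2 sH by (auto simp: cmp_def)
  have gs: "score 0 \<beta> (gamma fs r) = real (Fv (seqS fs) (N + jval fs r)) - 2 * \<beta> * real (jval fs r)" for r
    unfolding gamma_def T using gam_score[OF sS lS c1S jle] by simp
  from align_bound[OF assms(4)[unfolded T] lS assms(5)] obtain p where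
    p: "p \<le> 2 * N" "score 0 \<beta> G \<le> real (Fv (seqS fs) p) - 2 * \<beta> * \<bar>real N - real p\<bar>" by blast
  show ?thesis
  proof (cases "N \<le> p")
    case True
    define t where "t = p - N"
    have pt: "p = length H + t" using True t_def lH by simp
    have tl: "t \<le> length (concat (map blk (map gB (rev fs))))" using p(1) pt lH H2 H2_def by simp
    from block_max[OF tl, of "2 * \<beta>"] obtain i where i: "i \<le> m"
      "real (Fv H2 t) - 2 * \<beta> * t \<le> real (Fv H2 (bd (map gB (rev fs)) i)) - 2 * \<beta> * bd (map gB (rev fs)) i"
      unfolding H2_def m_def by auto
    have bdi: "bd (map gB (rev fs)) i = jval fs (m - i)" using bd_B[OF ab] i m_def by simp
    have "score 0 \<beta> G \<le> real (count_list H 1) + (real (Fv H2 t) - 2 * \<beta> * t)"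
      using p(2) True unfolding S pt Fv_shift by (simp add: lH algebra_simps)
    also have "\<dots> \<le> real (count_list H 1) + (real (Fv H2 (jval fs (m - i))) - 2 * \<beta> * jval fs (m - i))"
      using i bdi by simp
    also have "\<dots> = score 0 \<beta> (gamma fs (m - i))"
      unfolding gs S using Fv_shift[of H H2 "jval fs (m - i)"] lH by simp
    finally show ?thesis using m_def by (intro bexI[of _ "m - i"]) auto
  next
    case False
    have pl: "p \<le> length (concat (map blk (map gA fs)))" using False lH H_def by simp
    from block_max[OF pl, of "- 2 * \<beta>"] obtain i where i: "i \<le> m"
      "real (Fv H p) + 2 * \<beta> * p \<le> real (Fv H (bd (map gA fs) i)) + 2 * \<beta> * bd (map gA fs) i"
      unfolding H_def m_def by auto
    define j where "j = jval fs i"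
    have bdi: "bd (map gA fs) i = N - j"
      using bd_A[OF ab, of i] sum_take_drop[of "\<lambda>p. 2 * snd p" i fs] by (simp add: j_def jval_drop N_def)
    have jN: "j \<le> N" using jle j_def by simp
    have "score 0 \<beta> G \<le> real (Fv H p) + real (count_list H2 0) - 2 * \<beta> * (real N - real p)"
      using p(2) False Fv_prefix[of p H H2] lH unfolding S by simp
    also have "\<dots> \<le> real (Fv H (N - j)) + real (count_list H2 0) - 2 * \<beta> * real j"
      using i bdi jN by (simp add: algebra_simps of_nat_diff)
    also have "\<dots> = real (Fv (seqS fs) (N - j)) - 2 * \<beta> * real j"
      unfolding S using Fv_prefix[of "N - j" H H2] lH by simp
    also have "\<dots> = real (Fv (seqS fs) (N + j)) - 2 * \<beta> * real j"
      using symm[OF sH lH jN] S H2 by simp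
    also have "\<dots> = score 0 \<beta> (gamma fs i)" using gs j_def by simp
    finally show ?thesis using i m_def by (intro bexI[of _ i]) auto
  qed
qed

end
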